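(* Let $M$ be a $*$-left Ehresmann monoid and $H\subseteq M$ a proper atomic subset. Then for every $h\in H$, $h\,\sigma\,1$ if and only if $h\in E$.
   Context: A $*$-left Ehresmann monoid is a monoid $M$ with unary operations $+,*$ such that $x^+x=x$, $(x^+y^+)^+=x^+y^+$, $x^+y^+=y^+x^+$, $(xy)^+=(xy^+)^+$, $xx^*=x$, $(x^* )^*=x^*$, $x^*y^*=y^*x^*$, $(xy^* )^*y^*=(xy^* )^*$, $(x^* )^+=x^*$, $(x^+)^*=x^+$. Its semilattice of projections is $E=\{a^+\}=\{a^*\}$; $\sigma$ is the least monoid congruence on $M$ containing $E\times E$. $H\subseteq M$ is atomic if: (H1) $E\subseteq H$; (H2) $h\in H,e\in E$ imply $he\in H$ and $(he)^*=h^*e$; (H3) if $h\in H$, $k\in H\setminus E$, $h^*\ge k^+$ then $hk\in H$ and $(hk)^*=k^*$; (H4) every $m\in M$ is $\sigma$-related to some $h\in H$; (H5) if $h,k,w\in H$, $hk\,\sigma\,w$ and $k^*=w^*$, then some $u\in H$ has $u\,\sigma\,h$ and $u^*\ge k^+$. $H$ is proper if for all $h,k\in H$: ($h^*=k^*$ and $h\,\sigma\,k$) iff $h=k$. *)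

theory Defs
  imports Main
begin

text \<open>A star-left Ehresmann monoid: a monoid (type class monoid_mult, the whole
type is the monoid) with unary operations pl (x^+) and st (x^star).\<close>

definition star_left_ehresmann :: "('a::monoid_mult \<Rightarrow> 'a) \<Rightarrow> ('a \<Rightarrow> 'a) \<Rightarrow> bool" where
  "star_left_ehresmann pl st \<longleftrightarrow>
     (\<forall>x. pl x * x = x) \<and>
     (\<forall>x y. pl (pl x * pl y) = pl x * pl y) \<and>
     (\<forall>x y. pl x * pl y = pl y * pl x) \<and>
     (\<forall>x y. pl (x * y) = pl (x * pl y)) \<and>
     (\<forall>x. x * st x = x) \<and>
     (\<forall>x. st (st x) = st x) \<and>
     (\<forall>x y. st x * st y = st y * st x) \<and>
     (\<forall>x y. st (x * st y) * st y = st (x * st y)) \<and>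
     (\<forall>x. pl (st x) = st x) \<and>
     (\<forall>x. st (pl x) = pl x)"

definition projections :: "('a \<Rightarrow> 'a) \<Rightarrow> 'a set" where
  "projections pl = range pl"

definition proj_le :: "'a::monoid_mult \<Rightarrow> 'a \<Rightarrow> bool" where
  "proj_le e f \<longleftrightarrow> e = e * f"

definition monoid_congruence :: "('a::monoid_mult \<times> 'a) set \<Rightarrow> bool" where
  "monoid_congruence R \<longleftrightarrow> equiv UNIV R \<and>
     (\<forall>a b c d. (a, b) \<in> R \<and> (c, d) \<in> R \<longrightarrow> (a * c, b * d) \<in> R)"

definition sigma_cong :: "('a::monoid_mult \<Rightarrow> 'a) \<Rightarrow> ('a \<times> 'a) set" where
  "sigma_cong pl = \<Inter> {R. monoid_congruence R \<and> projections pl \<times> projections pl \<subseteq> R}"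

definition atomic_subset :: "('a::monoid_mult \<Rightarrow> 'a) \<Rightarrow> ('a \<Rightarrow> 'a) \<Rightarrow> 'a set \<Rightarrow> bool" where
  "atomic_subset pl st H \<longleftrightarrow>
     projections pl \<subseteq> H \<and>
     (\<forall>h\<in>H. \<forall>e\<in>projections pl. h * e \<in> H \<and> st (h * e) = st h * e) \<and>
     (\<forall>h\<in>H. \<forall>k\<in>H - projections pl. proj_le (pl k) (st h) \<longrightarrow>
         h * k \<in> H \<and> st (h * k) = st k) \<and>
     (\<forall>m. \<exists>h\<in>H. (m, h) \<in> sigma_cong pl) \<and>
     (\<forall>h\<in>H. \<forall>k\<in>H. \<forall>w\<in>H. (h * k, w) \<in> sigma_cong pl \<and> st k = st w \<longrightarrow>
         (\<exists>u\<in>H. (u, h) \<in> sigma_cong pl \<and> proj_le (pl k) (st u)))"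

definition proper_subset :: "('a::monoid_mult \<Rightarrow> 'a) \<Rightarrow> ('a \<Rightarrow> 'a) \<Rightarrow> 'a set \<Rightarrow> bool" where
  "proper_subset pl st H \<longleftrightarrow>
     (\<forall>h\<in>H. \<forall>k\<in>H. (st h = st k \<and> (h, k) \<in> sigma_cong pl) \<longleftrightarrow> h = k)"

end

theory Submission
  imports Defs
begin

lemma sigma_mem: "(a, b) \<in> sigma_cong pl \<longleftrightarrow>
  (\<forall>R. monoid_congruence R \<and> projections pl \<times> projections pl \<subseteq> R \<longrightarrow> (a, b) \<in> R)"
  unfolding sigma_cong_def by blast

lemma sigma_EE: "e \<in> projections pl \<Longrightarrow> f \<in> projections pl \<Longrightarrow> (e, f) \<in> sigma_cong pl"
  unfolding sigma_mem by blast

lemma sigma_sym: "(a, b) \<in> sigma_cong pl \<Longrightarrow> (b, a) \<in> sigma_cong pl"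
proof -
  assume a: "(a, b) \<in> sigma_cong pl"
  show ?thesis unfolding sigma_mem
  proof (intro allI impI)
    fix R assume r: "monoid_congruence R \<and> projections pl \<times> projections pl \<subseteq> R"
    hence "(a, b) \<in> R" using a unfolding sigma_mem by blast
    moreover have "sym R" using r unfolding monoid_congruence_def equiv_def by blast
    ultimately show "(b, a) \<in> R" by (rule symD[rotated])
  qed
qed

lemma sigma_trans: "(a, b) \<in> sigma_cong pl \<Longrightarrow> (b, c) \<in> sigma_cong pl \<Longrightarrow> (a, c) \<in> sigma_cong pl"
proof -
  assume a: "(a, b) \<in> sigma_cong pl" and b: "(b, c) \<in> sigma_cong pl"
  show ?thesis unfolding sigma_mem
  proof (intro allI impI)
    fix R assume r: "monoid_congruence R \<and> projections pl \<times> projections pl \<subseteq> R"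
    hence "(a, b) \<in> R" "(b, c) \<in> R" using a b unfolding sigma_mem by blast+
    moreover have "trans R" using r unfolding monoid_congruence_def equiv_def by blast
    ultimately show "(a, c) \<in> R" by (meson transD)
  qed
qed

theorem mainTheorem7:
  fixes pl st :: "'a::monoid_mult \<Rightarrow> 'a" and H :: "'a set"
  assumes "star_left_ehresmann pl st"
    and "atomic_subset pl st H"
    and "proper_subset pl st H"
    and "h \<in> H"
  shows "(h, 1) \<in> sigma_cong pl \<longleftrightarrow> h \<in> projections pl"
proof -
  have "pl 1 * 1 = 1" using assms(1) unfolding star_left_ehresmann_def by blast
  hence p1: "pl 1 = 1" by simp
  have oneE: "1 \<in> projections pl" unfolding projections_def using p1 by (metis rangeI)
  show ?thesis
  proof
    assume hs: "(h, 1) \<in> sigma_cong pl"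
    have "pl (st h) = st h" using assms(1) unfolding star_left_ehresmann_def by blast
    hence eE: "st h \<in> projections pl" unfolding projections_def by (metis rangeI)
    have eH: "st h \<in> H" using eE assms(2) unfolding atomic_subset_def by blast
    have ste: "st (st h) = st h" using assms(1) unfolding star_left_ehresmann_def by blast
    have "(h, st h) \<in> sigma_cong pl" using hs sigma_EE[OF oneE eE] sigma_trans by blast
    moreover have "\<forall>k\<in>H. (st h = st k \<and> (h, k) \<in> sigma_cong pl) \<longleftrightarrow> h = k"
      using assms(3,4) unfolding proper_subset_def by blast
    ultimately have "h = st h" using eH ste by (metis (no_types, lifting))
    thus "h \<in> projections pl" using eE by simp
  next
    assume "h \<in> projections pl"
    thus "(h, 1) \<in> sigma_cong pl" using sigma_EE oneE by blast
  qed
qed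

end
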